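(* Let $P$ be any poset on $\{1,2,\ldots,n\}$. Every weak $P$-partition $f$ has a unique expression as (i) $f=\sum_{k=1}^{\max(f)}\chi_{I_k}$ for a multiset $I_1\supseteq I_2\supseteq\cdots\supseteq I_{\max(f)}$ of nested nonempty order ideals of $P$; and also a unique expression as (ii) $f=\sum_{i=1}^{\nu(f)}\chi_{J_i}$ for a multiset $\{J_1,\ldots,J_{\nu(f)}\}$ of nonempty connected order ideals of $P$ which pairwise intersect trivially.
   Context: All posets are finite. A weak $P$-partition is a map $f:\{1,\ldots,n\}\to\mathbb{N}$ with $f(i)\ge f(j)$ whenever $i<_Pj$; $\max(f)$ is its maximum value. For $A\subseteq\{1,\ldots,n\}$, $\chi_A\in\{0,1\}^n$ is its indicator vector. An order ideal is a downward-closed subset of $P$; a connected order ideal is a nonempty order ideal whose induced Hasse diagram is connected. Two connected order ideals intersect trivially if they are disjoint or one contains the other. $\nu(f)$ denotes the number of terms (with multiplicity) in the expression of part (ii). *)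

theory Defs
  imports Main "HOL-Library.Multiset"
begin

definition poset_on :: "nat \<Rightarrow> (nat \<Rightarrow> nat \<Rightarrow> bool) \<Rightarrow> bool" where
  "poset_on n le \<longleftrightarrow>
     (\<forall>x\<in>{1..n}. le x x) \<and>
     (\<forall>x\<in>{1..n}. \<forall>y\<in>{1..n}. le x y \<and> le y x \<longrightarrow> x = y) \<and>
     (\<forall>x\<in>{1..n}. \<forall>y\<in>{1..n}. \<forall>z\<in>{1..n}. le x y \<and> le y z \<longrightarrow> le x z)"

definition weak_P_partition :: "nat \<Rightarrow> (nat \<Rightarrow> nat \<Rightarrow> bool) \<Rightarrow> (nat \<Rightarrow> nat) \<Rightarrow> bool" where
  "weak_P_partition n le f \<longleftrightarrow>
     (\<forall>i\<in>{1..n}. \<forall>j\<in>{1..n}. le i j \<and> i \<noteq> j \<longrightarrow> f j \<le> f i)"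

text \<open>max(f), with the convention max = 0 on the empty ground set.\<close>
definition pmax :: "nat \<Rightarrow> (nat \<Rightarrow> nat) \<Rightarrow> nat" where
  "pmax n f = Max (insert 0 (f ` {1..n}))"

definition order_ideal :: "nat \<Rightarrow> (nat \<Rightarrow> nat \<Rightarrow> bool) \<Rightarrow> nat set \<Rightarrow> bool" where
  "order_ideal n le I \<longleftrightarrow> I \<subseteq> {1..n} \<and> (\<forall>x\<in>I. \<forall>y\<in>{1..n}. le y x \<longrightarrow> y \<in> I)"

definition covers :: "nat \<Rightarrow> (nat \<Rightarrow> nat \<Rightarrow> bool) \<Rightarrow> nat \<Rightarrow> nat \<Rightarrow> bool" where
  "covers n le x y \<longleftrightarrow> x \<in> {1..n} \<and> y \<in> {1..n} \<and> le x y \<and> x \<noteq> y \<and>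
     \<not> (\<exists>z\<in>{1..n}. le x z \<and> le z y \<and> z \<noteq> x \<and> z \<noteq> y)"

definition connected_order_ideal :: "nat \<Rightarrow> (nat \<Rightarrow> nat \<Rightarrow> bool) \<Rightarrow> nat set \<Rightarrow> bool" where
  "connected_order_ideal n le I \<longleftrightarrow> order_ideal n le I \<and> I \<noteq> {} \<and>
     (\<forall>x\<in>I. \<forall>y\<in>I. (\<lambda>a b. a \<in> I \<and> b \<in> I \<and> (covers n le a b \<or> covers n le b a))\<^sup>*\<^sup>* x y)"

text \<open>Value at x of the sum of indicator vectors of the sets in a multiset.\<close>
definition chi_sum :: "nat set multiset \<Rightarrow> nat \<Rightarrow> nat" where
  "chi_sum M x = size (filter_mset (\<lambda>I. x \<in> I) M)"

end

theory Submission
  imports Defs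
begin

lemma chi_sum_plus: "chi_sum (A + B) x = chi_sum A x + chi_sum B x"
  by (simp add: chi_sum_def)

lemma chi_sum_sum: "finite K \<Longrightarrow> chi_sum (\<Sum>k\<in>K. F k) x = (\<Sum>k\<in>K. chi_sum (F k) x)"
  by (induction K rule: finite_induct) (simp_all add: chi_sum_def)

lemma chi_single: "chi_sum {#A#} x = (if x \<in> A then 1 else 0)"
  by (simp add: chi_sum_def)

lemma chi_sum_diff:
  assumes "N \<subseteq># M" shows "chi_sum (M - N) x = chi_sum M x - chi_sum N x"
proof -
  have "M = (M - N) + N" using assms by simp
  then have "chi_sum M x = chi_sum (M - N) x + chi_sum N x" by (metis chi_sum_plus)
  then show ?thesis by simp
qed

lemma chi_sum_mset_set: "finite X \<Longrightarrow> chi_sum (mset_set X) x = card {I\<in>X. x \<in> I}"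
  by (simp add: chi_sum_def filter_mset_mset_set)

lemma chi_sum_pos: "J \<in># M \<Longrightarrow> x \<in> J \<Longrightarrow> chi_sum M x > 0"
proof -
  assume "J \<in># M" "x \<in> J"
  then have "J \<in># filter_mset (\<lambda>I. x \<in> I) M" by simp
  then show ?thesis unfolding chi_sum_def by (metis gr0I set_mset_empty empty_iff size_eq_0_iff_empty)
qed

section \<open>Maximal elements and generic uniqueness\<close>

definition laminar :: "nat set multiset \<Rightarrow> bool" where
  "laminar M \<longleftrightarrow> (\<forall>I\<in>#M. \<forall>J\<in>#M. I \<inter> J = {} \<or> I \<subseteq> J \<or> J \<subseteq> I)"

definition maxs :: "nat set multiset \<Rightarrow> nat set set" where
  "maxs M = {I \<in> set_mset M. \<forall>J\<in>#M. I \<subseteq> J \<longrightarrow> I = J}"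

lemma maxs_finite: "finite (maxs M)"
  unfolding maxs_def by simp

lemma maxs_sub: "mset_set (maxs M) \<subseteq># M"
proof -
  have "maxs M \<subseteq> set_mset M" unfolding maxs_def by auto
  moreover have "finite (maxs M)" by (rule maxs_finite)
  ultimately have "mset_set (maxs M) \<subseteq># mset_set (set_mset M)"
    by (simp add: msubset_mset_set_iff)
  then show ?thesis using mset_set_set_mset_msubset by (rule subset_mset.order_trans)
qed

lemma maxs_disj:
  assumes "laminar M" "A \<in> maxs M" "B \<in> maxs M" "A \<noteq> B"
  shows "A \<inter> B = {}"
proof -
  have AM: "A \<in># M" "\<forall>J\<in>#M. A \<subseteq> J \<longrightarrow> A = J" using assms(2) unfolding maxs_def by auto
  have BM: "B \<in># M" "\<forall>J\<in>#M. B \<subseteq> J \<longrightarrow> B = J" using assms(3) unfolding maxs_def by auto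
  have "A \<inter> B = {} \<or> A \<subseteq> B \<or> B \<subseteq> A" using assms(1) AM(1) BM(1) unfolding laminar_def by blast
  moreover have "\<not> A \<subseteq> B" using AM(2) BM(1) assms(4) by blast
  moreover have "\<not> B \<subseteq> A" using BM(2) AM(1) assms(4) by blast
  ultimately show ?thesis by blast
qed

lemma exists_max:
  assumes "I \<in># M" "\<forall>J\<in>#M. finite J" shows "\<exists>J\<in>maxs M. I \<subseteq> J"
proof -
  let ?S = "{J \<in> set_mset M. I \<subseteq> J}"
  have fin: "finite (card ` ?S)" by simp
  have ne: "?S \<noteq> {}" using assms by auto
  have "Max (card ` ?S) \<in> card ` ?S" using Max_in[OF fin] ne by auto
  then obtain J where J: "J \<in> ?S" "card J = Max (card ` ?S)" by auto
  have "\<forall>K\<in>#M. J \<subseteq> K \<longrightarrow> J = K"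
  proof (intro ballI impI)
    fix K assume K: "K \<in># M" "J \<subseteq> K"
    then have "K \<in> ?S" using J by auto
    then have "card K \<le> card J" using J(2) fin by simp
    show "J = K" using K \<open>card K \<le> card J\<close> assms(2) by (simp add: card_seteq)
  qed
  then have "J \<in> maxs M" using J unfolding maxs_def by auto
  then show ?thesis using J by auto
qed


lemma union_maxs:
  assumes "\<forall>J\<in>#M. finite J" shows "\<Union>(maxs M) = \<Union>(set_mset M)"
proof (rule equalityI)
  have "maxs M \<subseteq> set_mset M" unfolding maxs_def by (rule Collect_restrict)
  then show "\<Union>(maxs M) \<subseteq> \<Union>(set_mset M)" by (rule Union_mono)
next
  show "\<Union>(set_mset M) \<subseteq> \<Union>(maxs M)"
  proof
    fix x assume "x \<in> \<Union>(set_mset M)"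
    then obtain I where "I \<in># M" "x \<in> I" by blast
    then obtain J where "J \<in> maxs M" "I \<subseteq> J" using exists_max[OF _ assms] by blast
    then show "x \<in> \<Union>(maxs M)" using \<open>x \<in> I\<close> by blast
  qed
qed

lemma supp:
  assumes "\<forall>J\<in>#M. J \<subseteq> {1..n}"
  shows "\<Union>(set_mset M) = {x\<in>{1..n}. chi_sum M x > 0}"
proof safe
  fix x J assume "J \<in># M" "x \<in> J"
  then show "x \<in> {1..n}" using assms by blast
  show "chi_sum M x > 0" using chi_sum_pos \<open>J \<in># M\<close> \<open>x \<in> J\<close> by blast
next
  fix x assume "chi_sum M x > 0"
  then have "filter_mset (\<lambda>I. x \<in> I) M \<noteq> {#}" unfolding chi_sum_def by (metis size_empty less_irrefl)
  then obtain J where "J \<in># filter_mset (\<lambda>I. x \<in> I) M" by (meson multiset_nonemptyE)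
  then show "x \<in> \<Union>(set_mset M)" by auto
qed

lemma maxs_empty: "maxs M = {} \<Longrightarrow> \<forall>J\<in>#M. finite J \<Longrightarrow> M = {#}"
proof (rule ccontr)
  assume a: "maxs M = {}" "\<forall>J\<in>#M. finite J" "M \<noteq> {#}"
  obtain I where "I \<in># M" using multiset_nonemptyE[OF a(3)] by blast
  then show False using exists_max[OF _ a(2)] a(1) by blast
qed

lemma uniq_gen:
  assumes closed: "\<And>M N. C M \<Longrightarrow> N \<subseteq># M \<Longrightarrow> C N"
    and base: "\<And>M. C M \<Longrightarrow> (\<forall>J\<in>#M. J \<subseteq> {1..(n::nat)})"
    and hmax: "\<And>M1 M2. C M1 \<Longrightarrow> C M2 \<Longrightarrow> \<forall>x\<in>{1..n}. chi_sum M1 x = chi_sum M2 x \<Longrightarrow> maxs M1 = maxs M2"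
  shows "C M1 \<Longrightarrow> C M2 \<Longrightarrow> \<forall>x\<in>{1..n}. chi_sum M1 x = chi_sum M2 x \<Longrightarrow> M1 = M2"
proof (induction "size M1" arbitrary: M1 M2 rule: less_induct)
  case less
  have fin1: "\<forall>J\<in>#M1. finite J"
  proof
    fix J assume "J \<in># M1" then have "J \<subseteq> {1..n}" using base[OF less(2)] by blast
    then show "finite J" by (rule finite_subset) simp
  qed
  have fin2: "\<forall>J\<in>#M2. finite J"
  proof
    fix J assume "J \<in># M2" then have "J \<subseteq> {1..n}" using base[OF less(3)] by blast
    then show "finite J" by (rule finite_subset) simp
  qed
  define X where "X = maxs M1"
  have X2: "maxs M2 = X" using hmax[OF less(2,3,4)] X_def by simp
  show ?case
  proof (cases "X = {}")
    case True
    then have "M1 = {#}" "M2 = {#}" using maxs_empty fin1 fin2 X2 X_def by auto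
    then show ?thesis by simp
  next
    case False
    define N1 where "N1 = M1 - mset_set X"
    define N2 where "N2 = M2 - mset_set X"
    have s1: "mset_set X \<subseteq># M1" using maxs_sub X_def by simp
    have s2: "mset_set X \<subseteq># M2" using maxs_sub[of M2] X2 by simp
    have C1: "C N1" using closed[OF less(2)] N1_def by simp
    have C2: "C N2" using closed[OF less(3)] N2_def by simp
    have ch: "\<forall>x\<in>{1..n}. chi_sum N1 x = chi_sum N2 x"
      using less(4) chi_sum_diff[OF s1] chi_sum_diff[OF s2] N1_def N2_def by simp
    have "finite X" using X_def maxs_finite by simp
    then have "size (mset_set X) > 0" using False by (simp add: card_gt_0_iff)
    moreover have "size N1 = size M1 - size (mset_set X)" using N1_def size_Diff_submset[OF s1] by simp
    ultimately have "size N1 < size M1" using size_mset_mono[OF s1] by linarith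
    then have "N1 = N2" using less(1)[of N1 N2] C1 C2 ch by simp
    have "M1 = N1 + mset_set X" using s1 N1_def by simp
    moreover have "M2 = N2 + mset_set X" using s2 N2_def by simp
    ultimately show ?thesis using \<open>N1 = N2\<close> by simp
  qed
qed


lemma maxs_chain_eq:
  assumes ch: "\<forall>I\<in>#M. \<forall>J\<in>#M. I \<subseteq> J \<or> J \<subseteq> I" and ne: "\<forall>I\<in>#M. I \<noteq> {} \<and> finite I"
  shows "maxs M = (if \<Union>(set_mset M) = {} then {} else {\<Union>(set_mset M)})"
proof (cases "maxs M = {}")
  case True
  then have "M = {#}" using maxs_empty ne by blast
  then show ?thesis using True by simp
next
  case False
  then obtain A where A: "A \<in> maxs M" by blast
  have all: "\<And>B. B \<in> maxs M \<Longrightarrow> B = A"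
  proof -
    fix B assume B: "B \<in> maxs M"
    have AM: "A \<in># M" "\<forall>J\<in>#M. A \<subseteq> J \<longrightarrow> A = J" using A unfolding maxs_def by auto
    have BM: "B \<in># M" "\<forall>J\<in>#M. B \<subseteq> J \<longrightarrow> B = J" using B unfolding maxs_def by auto
    have "A \<subseteq> B \<or> B \<subseteq> A" using ch AM(1) BM(1) by blast
    then show "B = A" using AM BM by blast
  qed
  then have "maxs M = {A}" using A by blast
  moreover have "\<Union>(maxs M) = \<Union>(set_mset M)" using union_maxs ne by blast
  moreover have "A \<noteq> {}" using A ne unfolding maxs_def by auto
  ultimately show ?thesis by auto
qed

lemma hmax_chain:
  assumes "\<forall>I\<in>#M1. I \<noteq> {} \<and> I \<subseteq> {1..n}" "\<forall>I\<in>#M1. \<forall>J\<in>#M1. I \<subseteq> J \<or> J \<subseteq> I"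
    "\<forall>I\<in>#M2. I \<noteq> {} \<and> I \<subseteq> {1..n}" "\<forall>I\<in>#M2. \<forall>J\<in>#M2. I \<subseteq> J \<or> J \<subseteq> I"
    "\<forall>x\<in>{1..n}. chi_sum M1 x = chi_sum M2 x"
  shows "maxs M1 = maxs M2"
proof -
  have f1: "\<forall>I\<in>#M1. I \<noteq> {} \<and> finite I" using assms(1) finite_subset[of _ "{1..n}"] by auto
  have f2: "\<forall>I\<in>#M2. I \<noteq> {} \<and> finite I" using assms(3) finite_subset[of _ "{1..n}"] by auto
  have "\<Union>(set_mset M1) = \<Union>(set_mset M2)"
    using supp[of M1 n] supp[of M2 n] assms(1,3,5) by auto
  then show ?thesis using maxs_chain_eq[OF assms(2) f1] maxs_chain_eq[OF assms(4) f2] by simp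
qed

lemma conn_in:
  assumes A: "connected_order_ideal n le A"
    and X: "\<forall>B\<in>X. order_ideal n le B" "\<forall>B\<in>X. \<forall>B'\<in>X. B \<noteq> B' \<longrightarrow> B \<inter> B' = {}"
    and sub: "A \<subseteq> \<Union>X" and x0: "x0 \<in> A" "x0 \<in> B" "B \<in> X"
  shows "A \<subseteq> B"
proof
  fix y assume "y \<in> A"
  then have "(\<lambda>a b. a \<in> A \<and> b \<in> A \<and> (covers n le a b \<or> covers n le b a))\<^sup>*\<^sup>* x0 y"
    using A x0 unfolding connected_order_ideal_def by blast
  then show "y \<in> B"
  proof (induction rule: rtranclp_induct)
    case base
    then show ?case using x0 by simp
  next
    case (step a b)
    then have ab: "a \<in> A" "b \<in> A" "covers n le a b \<or> covers n le b a" "a \<in> B" by auto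
    from ab(3) show ?case
    proof
      assume c: "covers n le a b"
      obtain Y where Y: "Y \<in> X" "b \<in> Y" using sub ab(2) by blast
      have "a \<in> Y" using X(1) Y c unfolding order_ideal_def covers_def by blast
      then have "Y = B" using X(2) Y(1) x0(3) ab(4) by blast
      then show ?thesis using Y by simp
    next
      assume c: "covers n le b a"
      show ?thesis using X(1) x0(3) c ab(4) unfolding order_ideal_def covers_def by blast
    qed
  qed
qed

lemma coi_oi: "connected_order_ideal n le J \<Longrightarrow> order_ideal n le J"
  unfolding connected_order_ideal_def by simp

lemma coi_ne: "connected_order_ideal n le J \<Longrightarrow> J \<noteq> {}"
  unfolding connected_order_ideal_def by simp

lemma oi_sub: "order_ideal n le J \<Longrightarrow> J \<subseteq> {1..n}"
  unfolding order_ideal_def by simp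

lemma hmax_conn_aux:
  assumes "laminar M1" "\<forall>J\<in>#M1. connected_order_ideal n le J"
    "laminar M2" "\<forall>J\<in>#M2. connected_order_ideal n le J"
    "\<forall>x\<in>{1..n}. chi_sum M1 x = chi_sum M2 x"
  shows "maxs M1 \<subseteq> maxs M2"
proof
  fix A assume A: "A \<in> maxs M1"
  have s1: "\<forall>J\<in>#M1. J \<subseteq> {1..n}" using assms(2) coi_oi oi_sub by blast
  have s2: "\<forall>J\<in>#M2. J \<subseteq> {1..n}" using assms(4) coi_oi oi_sub by blast
  have f1: "\<forall>J\<in>#M1. finite J" using s1 finite_subset[of _ "{1..n}"] by auto
  have f2: "\<forall>J\<in>#M2. finite J" using s2 finite_subset[of _ "{1..n}"] by auto
  have U: "\<Union>(maxs M1) = \<Union>(maxs M2)"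
    using union_maxs[OF f1] union_maxs[OF f2] supp[OF s1] supp[OF s2] assms(5) by auto
  have Am: "A \<in># M1" using A unfolding maxs_def by auto
  have cA: "connected_order_ideal n le A" using Am assms(2) by blast
  then obtain x0 where x0: "x0 \<in> A" using coi_ne by blast
  then obtain B where B: "B \<in> maxs M2" "x0 \<in> B" using U A by blast
  have Bm: "B \<in># M2" using B unfolding maxs_def by auto
  have cB: "connected_order_ideal n le B" using Bm assms(4) by blast
  have X2: "\<forall>B\<in>maxs M2. order_ideal n le B" using assms(4) coi_oi unfolding maxs_def by blast
  have X1: "\<forall>B\<in>maxs M1. order_ideal n le B" using assms(2) coi_oi unfolding maxs_def by blast
  have D2: "\<forall>B\<in>maxs M2. \<forall>B'\<in>maxs M2. B \<noteq> B' \<longrightarrow> B \<inter> B' = {}"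
    using maxs_disj[OF assms(3)] by blast
  have D1: "\<forall>B\<in>maxs M1. \<forall>B'\<in>maxs M1. B \<noteq> B' \<longrightarrow> B \<inter> B' = {}"
    using maxs_disj[OF assms(1)] by blast
  have AU: "A \<subseteq> \<Union>(maxs M2)" using A U by blast
  have AB: "A \<subseteq> B"
    by (rule conn_in[OF cA X2 D2 AU x0 B(2) B(1)])
  obtain A' where A': "A' \<in> maxs M1" "x0 \<in> A'" using U B by blast
  have BU: "B \<subseteq> \<Union>(maxs M1)" using B U by blast
  have BA: "B \<subseteq> A'"
    by (rule conn_in[OF cB X1 D1 BU B(2) A'(2) A'(1)])
  have "A = A'" using D1 A A'(1) x0 A'(2) by blast
  then have "A = B" using AB BA by simp
  then show "A \<in> maxs M2" using B by simp
qed


section \<open>Components\<close>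

definition Rel :: "nat \<Rightarrow> (nat \<Rightarrow> nat \<Rightarrow> bool) \<Rightarrow> nat set \<Rightarrow> nat \<Rightarrow> nat \<Rightarrow> bool" where
  "Rel n le S = (\<lambda>a b. a \<in> S \<and> b \<in> S \<and> (covers n le a b \<or> covers n le b a))"

definition comp :: "nat \<Rightarrow> (nat \<Rightarrow> nat \<Rightarrow> bool) \<Rightarrow> nat set \<Rightarrow> nat \<Rightarrow> nat set" where
  "comp n le S x = {y \<in> S. (Rel n le S)\<^sup>*\<^sup>* x y}"

lemma Rel_symp: "symp (Rel n le S)"
  unfolding Rel_def symp_def by auto

lemma Rel_sym: "(Rel n le S)\<^sup>*\<^sup>* a b \<Longrightarrow> (Rel n le S)\<^sup>*\<^sup>* b a"
  using symp_rtranclp[OF Rel_symp] unfolding symp_def by blast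

lemma path_lemma:
  assumes P: "poset_on n le" and I: "order_ideal n le I"
  shows "x \<in> I \<Longrightarrow> y \<in> {1..n} \<Longrightarrow> le y x \<Longrightarrow> (Rel n le I)\<^sup>*\<^sup>* y x"
proof (induction "card {w\<in>{1..n}. le y w \<and> le w x}" arbitrary: x y rule: less_induct)
  case less
  have xn: "x \<in> {1..n}" using less(2) I unfolding order_ideal_def by blast
  have yI: "y \<in> I" using less(2-4) I unfolding order_ideal_def by blast
  show ?case
  proof (cases "y = x")
    case True then show ?thesis by simp
  next
    case ne: False
    show ?thesis
    proof (cases "covers n le y x")
      case True
      then have "Rel n le I y x" using yI less(2) unfolding Rel_def by simp
      then show ?thesis by simp
    next
      case False
      then obtain z where z: "z \<in> {1..n}" "le y z" "le z x" "z \<noteq> y" "z \<noteq> x"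
        using ne xn less(3,4) unfolding covers_def by blast
      have zI: "z \<in> I" using z less(2) I unfolding order_ideal_def by blast
      let ?T = "{w\<in>{1..n}. le y w \<and> le w x}"
      have fT: "finite ?T" by simp
      have antis: "\<And>a b. a \<in> {1..n} \<Longrightarrow> b \<in> {1..n} \<Longrightarrow> le a b \<Longrightarrow> le b a \<Longrightarrow> a = b"
        using P unfolding poset_on_def by blast
      have trans: "\<And>a b c. a \<in> {1..n} \<Longrightarrow> b \<in> {1..n} \<Longrightarrow> c \<in> {1..n} \<Longrightarrow> le a b \<Longrightarrow> le b c \<Longrightarrow> le a c"
        using P unfolding poset_on_def by blast
      have refl: "\<And>a. a \<in> {1..n} \<Longrightarrow> le a a" using P unfolding poset_on_def by blast
      have s1: "{w\<in>{1..n}. le y w \<and> le w z} \<subset> ?T"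
      proof
        show "{w\<in>{1..n}. le y w \<and> le w z} \<subseteq> ?T" using trans z xn by blast
        have "x \<in> ?T" using xn less(3,4) refl by blast
        moreover have "x \<notin> {w\<in>{1..n}. le y w \<and> le w z}" using antis z xn by blast
        ultimately show "{w\<in>{1..n}. le y w \<and> le w z} \<noteq> ?T" by blast
      qed
      have s2: "{w\<in>{1..n}. le z w \<and> le w x} \<subset> ?T"
      proof
        show "{w\<in>{1..n}. le z w \<and> le w x} \<subseteq> ?T" using trans z less(3) by blast
        have "y \<in> ?T" using less(3,4) refl by blast
        moreover have "y \<notin> {w\<in>{1..n}. le z w \<and> le w x}" using antis z less(3) by blast
        ultimately show "{w\<in>{1..n}. le z w \<and> le w x} \<noteq> ?T" by blast
      qed
      have "(Rel n le I)\<^sup>*\<^sup>* y z"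
        using less(1)[OF psubset_card_mono[OF fT s1] zI less(3) z(2)] .
      moreover have "(Rel n le I)\<^sup>*\<^sup>* z x"
        using less(1)[OF psubset_card_mono[OF fT s2] less(2) z(1) z(3)] .
      ultimately show ?thesis by simp
    qed
  qed
qed

lemma comp_coi:
  assumes P: "poset_on n le" and I: "order_ideal n le I" and x: "x \<in> I"
  shows "connected_order_ideal n le (comp n le I x)"
proof -
  let ?C = "comp n le I x"
  have sub: "?C \<subseteq> I" unfolding comp_def by auto
  have xC: "x \<in> ?C" using x unfolding comp_def by simp
  have oi: "order_ideal n le ?C"
    unfolding order_ideal_def
  proof (intro conjI ballI impI)
    show "?C \<subseteq> {1..n}" using sub I unfolding order_ideal_def by blast
  next
    fix a b assume a: "a \<in> ?C" and b: "b \<in> {1..n}" and ba: "le b a"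
    have aI: "a \<in> I" using a sub by blast
    have bI: "b \<in> I" using I aI b ba unfolding order_ideal_def by blast
    have "(Rel n le I)\<^sup>*\<^sup>* b a" using path_lemma[OF P I aI b ba] .
    then have "(Rel n le I)\<^sup>*\<^sup>* a b" by (rule Rel_sym)
    moreover have "(Rel n le I)\<^sup>*\<^sup>* x a" using a unfolding comp_def by simp
    ultimately show "b \<in> ?C" using bI unfolding comp_def by simp
  qed
  have pathC: "\<And>y. (Rel n le I)\<^sup>*\<^sup>* x y \<Longrightarrow> (Rel n le ?C)\<^sup>*\<^sup>* x y"
  proof -
    fix y assume "(Rel n le I)\<^sup>*\<^sup>* x y"
    then show "(Rel n le ?C)\<^sup>*\<^sup>* x y"
    proof (induction rule: rtranclp_induct)
      case base then show ?case by simp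
    next
      case (step a b)
      have "(Rel n le I)\<^sup>*\<^sup>* x b" using step(1,2) by simp
      then have "a \<in> ?C" "b \<in> ?C" using step(1,2) unfolding comp_def Rel_def by auto
      then have "Rel n le ?C a b" using step(2) unfolding Rel_def by auto
      then show ?case using step(3) by simp
    qed
  qed
  have conn: "\<forall>a\<in>?C. \<forall>b\<in>?C. (Rel n le ?C)\<^sup>*\<^sup>* a b"
  proof (intro ballI)
    fix a b assume a: "a \<in> ?C" and b: "b \<in> ?C"
    have "(Rel n le ?C)\<^sup>*\<^sup>* x a" using pathC a unfolding comp_def by simp
    then have "(Rel n le ?C)\<^sup>*\<^sup>* a x" by (rule Rel_sym)
    moreover have "(Rel n le ?C)\<^sup>*\<^sup>* x b" using pathC b unfolding comp_def by simp
    ultimately show "(Rel n le ?C)\<^sup>*\<^sup>* a b" by simp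
  qed
  show ?thesis unfolding connected_order_ideal_def using oi xC conn unfolding Rel_def by blast
qed

lemma comp_eq:
  assumes "v \<in> comp n le S w" shows "comp n le S v = comp n le S w"
proof -
  have vw: "(Rel n le S)\<^sup>*\<^sup>* w v" using assms unfolding comp_def by simp
  then have wv: "(Rel n le S)\<^sup>*\<^sup>* v w" by (rule Rel_sym)
  show ?thesis unfolding comp_def using vw wv
    by (meson rtranclp_trans)
qed

lemma comp_mono:
  assumes "S' \<subseteq> S" shows "comp n le S' x \<subseteq> comp n le S x"
proof -
  have "Rel n le S' \<le> Rel n le S" using assms unfolding Rel_def by auto
  then have "(Rel n le S')\<^sup>*\<^sup>* \<le> (Rel n le S)\<^sup>*\<^sup>*" by (rule rtranclp_mono)
  then show ?thesis unfolding comp_def using assms by blast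
qed

lemma comp_lam:
  assumes "S' \<subseteq> S" "I \<in> comp n le S ` S" "J \<in> comp n le S' ` S'"
  shows "I \<inter> J = {} \<or> J \<subseteq> I"
proof (cases "I \<inter> J = {}")
  case False
  then obtain u where u: "u \<in> I" "u \<in> J" by blast
  obtain w where w: "I = comp n le S w" using assms(2) by blast
  obtain v where v: "J = comp n le S' v" using assms(3) by blast
  have "J = comp n le S' u" using comp_eq u v by metis
  also have "\<dots> \<subseteq> comp n le S u" using comp_mono[OF assms(1)] .
  also have "\<dots> = I" using comp_eq u w by metis
  finally show ?thesis by simp
qed simp

lemma chi_comps:
  assumes "finite S"
  shows "chi_sum (mset_set (comp n le S ` S)) x = (if x \<in> S then 1 else 0)"
proof -
  have "chi_sum (mset_set (comp n le S ` S)) x = card {I \<in> comp n le S ` S. x \<in> I}"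
    using chi_sum_mset_set assms by simp
  also have "{I \<in> comp n le S ` S. x \<in> I} = (if x \<in> S then {comp n le S x} else {})"
  proof (cases "x \<in> S")
    case True
    have "\<And>I. I \<in> comp n le S ` S \<Longrightarrow> x \<in> I \<Longrightarrow> I = comp n le S x"
      using comp_eq by blast
    moreover have "x \<in> comp n le S x" using True unfolding comp_def by simp
    ultimately show ?thesis using True by auto
  next
    case False
    then show ?thesis unfolding comp_def by auto
  qed
  finally show ?thesis by simp
qed


section \<open>Levels\<close>

definition L :: "nat \<Rightarrow> (nat \<Rightarrow> nat) \<Rightarrow> nat \<Rightarrow> nat set" where
  "L n f k = {x\<in>{1..n}. k \<le> f x}"

lemma L_ideal: assumes "weak_P_partition n le f" shows "order_ideal n le (L n f k)"
  unfolding order_ideal_def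
proof (intro conjI ballI impI)
  show "L n f k \<subseteq> {1..n}" unfolding L_def by blast
next
  fix x y assume x: "x \<in> L n f k" and y: "y \<in> {1..n}" and yx: "le y x"
  have xn: "x \<in> {1..n}" "k \<le> f x" using x unfolding L_def by auto
  have "f x \<le> f y"
  proof (cases "y = x")
    case False
    then show ?thesis using assms y xn(1) yx unfolding weak_P_partition_def by blast
  qed simp
  then show "y \<in> L n f k" using xn y unfolding L_def by simp
qed

lemma L_mono: "k \<le> l \<Longrightarrow> L n f l \<subseteq> L n f k"
  unfolding L_def by auto

lemma f_le_pmax: "x \<in> {1..n} \<Longrightarrow> f x \<le> pmax n f"
  unfolding pmax_def by simp

lemma L_ne: assumes "1 \<le> k" "k \<le> pmax n f" shows "L n f k \<noteq> {}"
proof -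
  have "pmax n f \<in> insert 0 (f ` {1..n})" unfolding pmax_def by (rule Max_in) auto
  then obtain x where "x \<in> {1..n}" "f x = pmax n f" using assms by auto
  then show ?thesis using assms unfolding L_def by auto
qed

lemma levels_sum:
  assumes "x \<in> {1..n}"
  shows "(\<Sum>k\<in>{1..pmax n f}. (if x \<in> L n f k then 1 else 0::nat)) = f x"
proof -
  have "(\<Sum>k\<in>{1..pmax n f}. (if x \<in> L n f k then 1 else 0::nat)) = card {k\<in>{1..pmax n f}. x \<in> L n f k}"
    by (simp add: sum.If_cases Int_def)
  also have "{k\<in>{1..pmax n f}. x \<in> L n f k} = {1..f x}"
    using assms f_le_pmax[OF assms, of f] unfolding L_def by auto
  finally show ?thesis by simp
qed

theorem proposition2p5:
  fixes n :: nat and le :: "nat \<Rightarrow> nat \<Rightarrow> bool" and f :: "nat \<Rightarrow> nat"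
  assumes "poset_on n le" and "weak_P_partition n le f"
  shows "(\<exists>!M. size M = pmax n f \<and>
              (\<forall>I\<in>#M. order_ideal n le I \<and> I \<noteq> {}) \<and>
              (\<forall>I\<in>#M. \<forall>J\<in>#M. I \<subseteq> J \<or> J \<subseteq> I) \<and>
              (\<forall>x\<in>{1..n}. f x = chi_sum M x))
       \<and> (\<exists>!M. (\<forall>J\<in>#M. connected_order_ideal n le J) \<and>
              (\<forall>I\<in>#M. \<forall>J\<in>#M. I \<inter> J = {} \<or> I \<subseteq> J \<or> J \<subseteq> I) \<and>
              (\<forall>x\<in>{1..n}. f x = chi_sum M x))"
proof
  let ?p = "pmax n f"
  show "\<exists>!M. size M = pmax n f \<and>
              (\<forall>I\<in>#M. order_ideal n le I \<and> I \<noteq> {}) \<and>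
              (\<forall>I\<in>#M. \<forall>J\<in>#M. I \<subseteq> J \<or> J \<subseteq> I) \<and>
              (\<forall>x\<in>{1..n}. f x = chi_sum M x)"
  proof (rule ex_ex1I)
    define M where "M = (\<Sum>k\<in>{1..?p}. {#L n f k#})"
    have set: "set_mset M = L n f ` {1..?p}" unfolding M_def by (auto simp add: set_mset_sum)
    have sz: "size M = ?p" unfolding M_def by (simp add: size_multiset_sum)
    have oi: "\<forall>I\<in>#M. order_ideal n le I \<and> I \<noteq> {}"
    proof
      fix I assume "I \<in># M"
      then obtain k where k: "k \<in> {1..?p}" "I = L n f k" unfolding set by (rule imageE)
      then show "order_ideal n le I \<and> I \<noteq> {}" using L_ideal[OF assms(2)] L_ne[of k n f] by simp
    qed
    have ch: "\<forall>I\<in>#M. \<forall>J\<in>#M. I \<subseteq> J \<or> J \<subseteq> I"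
    proof (intro ballI)
      fix I J assume I: "I \<in># M" and J: "J \<in># M"
      obtain k where k: "I = L n f k" using I unfolding set by (rule imageE)
      obtain l where l: "J = L n f l" using J unfolding set by (rule imageE)
      show "I \<subseteq> J \<or> J \<subseteq> I"
      proof (cases "k \<le> l")
        case True then show ?thesis using L_mono[OF True] k l by simp
      next
        case False then have "l \<le> k" by simp
        then show ?thesis using L_mono[OF \<open>l \<le> k\<close>] k l by simp
      qed
    qed
    have cs: "\<forall>x\<in>{1..n}. f x = chi_sum M x"
    proof
      fix x assume x: "x \<in> {1..n}"
      have "chi_sum M x = (\<Sum>k\<in>{1..?p}. chi_sum {#L n f k#} x)" unfolding M_def by (rule chi_sum_sum) simp
      also have "\<dots> = (\<Sum>k\<in>{1..?p}. (if x \<in> L n f k then 1 else 0::nat))"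
        by (simp add: chi_single)
      also have "\<dots> = f x" using levels_sum[OF x] .
      finally show "f x = chi_sum M x" by simp
    qed
    show "\<exists>M. size M = pmax n f \<and>
              (\<forall>I\<in>#M. order_ideal n le I \<and> I \<noteq> {}) \<and>
              (\<forall>I\<in>#M. \<forall>J\<in>#M. I \<subseteq> J \<or> J \<subseteq> I) \<and>
              (\<forall>x\<in>{1..n}. f x = chi_sum M x)"
      using sz oi ch cs by (intro exI[of _ M] conjI)
  next
    let ?C = "\<lambda>M. (\<forall>I\<in>#M. order_ideal n le I \<and> I \<noteq> {}) \<and> (\<forall>I\<in>#M. \<forall>J\<in>#M. I \<subseteq> J \<or> J \<subseteq> I)"
    have closed: "\<And>M N. ?C M \<Longrightarrow> N \<subseteq># M \<Longrightarrow> ?C N"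
    proof -
      fix M N assume CM: "?C M" and NM: "N \<subseteq># M"
      have sub: "\<And>x. x \<in># N \<Longrightarrow> x \<in># M" using NM by (rule mset_subset_eqD)
      show "?C N" using CM sub by simp
    qed
    have base: "\<And>M. ?C M \<Longrightarrow> (\<forall>J\<in>#M. J \<subseteq> {1..n})"
    proof (intro ballI)
      fix M J assume "?C M" "J \<in># M"
      then have "order_ideal n le J" by simp
      then show "J \<subseteq> {1..n}" by (rule oi_sub)
    qed
    have hmax: "\<And>M1 M2. ?C M1 \<Longrightarrow> ?C M2 \<Longrightarrow> \<forall>x\<in>{1..n}. chi_sum M1 x = chi_sum M2 x \<Longrightarrow> maxs M1 = maxs M2"
    proof -
      fix M1 M2 assume a: "?C M1" "?C M2" "\<forall>x\<in>{1..n}. chi_sum M1 x = chi_sum M2 x"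
      have a1: "\<forall>I\<in>#M1. I \<noteq> {} \<and> I \<subseteq> {1..n}"
      proof
        fix I assume "I \<in># M1"
        then have "order_ideal n le I" "I \<noteq> {}" using a(1) by simp_all
        then show "I \<noteq> {} \<and> I \<subseteq> {1..n}" using oi_sub by blast
      qed
      have a2: "\<forall>I\<in>#M2. I \<noteq> {} \<and> I \<subseteq> {1..n}"
      proof
        fix I assume "I \<in># M2"
        then have "order_ideal n le I" "I \<noteq> {}" using a(2) by simp_all
        then show "I \<noteq> {} \<and> I \<subseteq> {1..n}" using oi_sub by blast
      qed
      show "maxs M1 = maxs M2"
        using hmax_chain[OF a1 _ a2 _ a(3)] a(1,2) by simp
    qed
    fix M1 M2
    assume h1: "size M1 = pmax n f \<and>
              (\<forall>I\<in>#M1. order_ideal n le I \<and> I \<noteq> {}) \<and>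
              (\<forall>I\<in>#M1. \<forall>J\<in>#M1. I \<subseteq> J \<or> J \<subseteq> I) \<and>
              (\<forall>x\<in>{1..n}. f x = chi_sum M1 x)"
      and h2: "size M2 = pmax n f \<and>
              (\<forall>I\<in>#M2. order_ideal n le I \<and> I \<noteq> {}) \<and>
              (\<forall>I\<in>#M2. \<forall>J\<in>#M2. I \<subseteq> J \<or> J \<subseteq> I) \<and>
              (\<forall>x\<in>{1..n}. f x = chi_sum M2 x)"
    have c1: "?C M1" using h1 by simp
    have c2: "?C M2" using h2 by simp
    have eq: "\<forall>x\<in>{1..n}. chi_sum M1 x = chi_sum M2 x" using h1 h2 by simp
    show "M1 = M2" by (rule uniq_gen[of ?C n M1 M2, OF closed base hmax c1 c2 eq])
  qed
next
  let ?p = "pmax n f"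
  show "\<exists>!M. (\<forall>J\<in>#M. connected_order_ideal n le J) \<and>
              (\<forall>I\<in>#M. \<forall>J\<in>#M. I \<inter> J = {} \<or> I \<subseteq> J \<or> J \<subseteq> I) \<and>
              (\<forall>x\<in>{1..n}. f x = chi_sum M x)"
  proof (rule ex_ex1I)
    define M where "M = (\<Sum>k\<in>{1..?p}. mset_set (comp n le (L n f k) ` L n f k))"
    have finL: "\<And>k. finite (L n f k)" unfolding L_def by simp
    have set: "set_mset M = (\<Union>k\<in>{1..?p}. comp n le (L n f k) ` L n f k)"
      unfolding M_def using finL by (simp add: set_mset_sum)
    have memM: "\<And>J. J \<in># M \<Longrightarrow> \<exists>k. J \<in> comp n le (L n f k) ` L n f k"
      unfolding set by blast
    have co: "\<forall>J\<in>#M. connected_order_ideal n le J"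
    proof
      fix J assume "J \<in># M"
      then obtain k where "J \<in> comp n le (L n f k) ` L n f k" using memM by blast
      then obtain x where "x \<in> L n f k" "J = comp n le (L n f k) x" by (rule imageE)
      then show "connected_order_ideal n le J" using comp_coi[OF assms(1) L_ideal[OF assms(2)]] by simp
    qed
    have lam: "\<forall>I\<in>#M. \<forall>J\<in>#M. I \<inter> J = {} \<or> I \<subseteq> J \<or> J \<subseteq> I"
    proof (intro ballI)
      fix I J assume "I \<in># M" "J \<in># M"
      then obtain k l where I: "I \<in> comp n le (L n f k) ` L n f k" and J: "J \<in> comp n le (L n f l) ` L n f l"
        using memM by blast
      show "I \<inter> J = {} \<or> I \<subseteq> J \<or> J \<subseteq> I"
      proof (cases "k \<le> l")
        case True
        have "I \<inter> J = {} \<or> J \<subseteq> I" by (rule comp_lam[OF L_mono[OF True] I J])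
        then show ?thesis by blast
      next
        case False
        then have lk: "l \<le> k" by simp
        have "J \<inter> I = {} \<or> I \<subseteq> J" by (rule comp_lam[OF L_mono[OF lk] J I])
        then show ?thesis by blast
      qed
    qed
    have cs: "\<forall>x\<in>{1..n}. f x = chi_sum M x"
    proof
      fix x assume x: "x \<in> {1..n}"
      have "chi_sum M x = (\<Sum>k\<in>{1..?p}. chi_sum (mset_set (comp n le (L n f k) ` L n f k)) x)"
        unfolding M_def by (rule chi_sum_sum) simp
      also have "\<dots> = (\<Sum>k\<in>{1..?p}. (if x \<in> L n f k then 1 else 0::nat))"
        by (rule sum.cong) (simp_all add: chi_comps[OF finL])
      also have "\<dots> = f x" using levels_sum[OF x] .
      finally show "f x = chi_sum M x" by simp
    qed
    show "\<exists>M. (\<forall>J\<in>#M. connected_order_ideal n le J) \<and>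
              (\<forall>I\<in>#M. \<forall>J\<in>#M. I \<inter> J = {} \<or> I \<subseteq> J \<or> J \<subseteq> I) \<and>
              (\<forall>x\<in>{1..n}. f x = chi_sum M x)"
      using co lam cs by (intro exI[of _ M] conjI)
  next
    let ?C = "\<lambda>M. (\<forall>J\<in>#M. connected_order_ideal n le J) \<and> laminar M"
    have closed: "\<And>M N. ?C M \<Longrightarrow> N \<subseteq># M \<Longrightarrow> ?C N"
    proof -
      fix M N assume CM: "?C M" and NM: "N \<subseteq># M"
      have sub: "\<And>x. x \<in># N \<Longrightarrow> x \<in># M" using NM by (rule mset_subset_eqD)
      show "?C N" using CM sub unfolding laminar_def by simp
    qed
    have base: "\<And>M. ?C M \<Longrightarrow> (\<forall>J\<in>#M. J \<subseteq> {1..n})"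
    proof (intro ballI)
      fix M J assume "?C M" "J \<in># M"
      then have "connected_order_ideal n le J" by simp
      then show "J \<subseteq> {1..n}" by (intro oi_sub coi_oi)
    qed
    have hmax: "\<And>M1 M2. ?C M1 \<Longrightarrow> ?C M2 \<Longrightarrow> \<forall>x\<in>{1..n}. chi_sum M1 x = chi_sum M2 x \<Longrightarrow> maxs M1 = maxs M2"
    proof -
      fix M1 M2 assume a: "?C M1" "?C M2" "\<forall>x\<in>{1..n}. chi_sum M1 x = chi_sum M2 x"
      have a': "\<forall>x\<in>{1..n}. chi_sum M2 x = chi_sum M1 x" using a(3) by simp
      have "maxs M1 \<subseteq> maxs M2" using a by (intro hmax_conn_aux[of M1 n le M2]) simp_all
      moreover have "maxs M2 \<subseteq> maxs M1" using a a' by (intro hmax_conn_aux[of M2 n le M1]) simp_all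
      ultimately show "maxs M1 = maxs M2" by (rule subset_antisym)
    qed
    fix M1 M2
    assume h1: "(\<forall>J\<in>#M1. connected_order_ideal n le J) \<and>
              (\<forall>I\<in>#M1. \<forall>J\<in>#M1. I \<inter> J = {} \<or> I \<subseteq> J \<or> J \<subseteq> I) \<and>
              (\<forall>x\<in>{1..n}. f x = chi_sum M1 x)"
      and h2: "(\<forall>J\<in>#M2. connected_order_ideal n le J) \<and>
              (\<forall>I\<in>#M2. \<forall>J\<in>#M2. I \<inter> J = {} \<or> I \<subseteq> J \<or> J \<subseteq> I) \<and>
              (\<forall>x\<in>{1..n}. f x = chi_sum M2 x)"
    have c1: "?C M1" using h1 unfolding laminar_def by simp
    have c2: "?C M2" using h2 unfolding laminar_def by simp
    have eq: "\<forall>x\<in>{1..n}. chi_sum M1 x = chi_sum M2 x" using h1 h2 by simp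
    show "M1 = M2" by (rule uniq_gen[of ?C n M1 M2, OF closed base hmax c1 c2 eq])
  qed
qed

end
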